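(* Consider the data-selling model described in the context, with $n$ buyers, and assume $z_0<\frac{1}{2\sqrt{\gamma}}\cdot\frac{n+1}{2n+1}$. Let $G$ be a core-periphery network on $N$ with periphery $P$, $|P|=m$, and core $K=N\setminus P$, $|K|=n-m$. Evaluate the payoffs on $G$ at the optimal contract whose target set is $P$. Then $G$ is Pareto-efficient among networks on $N$ with $n$ nodes: there is no network $G'$ on $N$ and optimal contract $C'$ for $G'$ such that - the seller's optimal profit under $G'$ is at least that under $G$, and - every buyer's expected payoff under $(G',C')$ is at least his payoff under $G$, with strict inequality for at least one buyer.
   Context: Model. There is a finite set of buyers $N=\{1,\dots,n\}$ and an undirected network $G$ on $N$; $N_i$ is the set of neighbors of $i$. A state $\theta\sim N(0,1/z_0)$ with $z_0>0$ is unknown to all. A contract $C$ consists of a target set $M(C)\subseteq N$, a common precision $z>0$, and prices $p_i\ge0$ for $i\in M(C)$. Each $i\in M(C)$ receives a signal $s_i=\theta+\varepsilon_i$, with $\varepsilon_i\sim N(0,1/z)$ independent. Each buyer observes the signals of his neighbors in $M(C)$ (and his own if he is in $M(C)$) and chooses $a_i$ to maximize $E[-(a_i-\theta)^2]$. With $m_i=|N_i\cap M(C)|$, buyer $i\in M(C)$ gets expected payoff $-\frac{1}{z_0+(m_i+1)z}-p_i$, and buyer $i\notin M(C)$ gets $-\frac{1}{z_0+m_iz}$. Buyer $i\in M(C)$ accepts iff $p_i\le \frac{1}{z_0+m_iz}-\frac{1}{z_0+(m_i+1)z}$. A contract is feasible if all $i\in M(C)$ accept. The seller's profit is $\sum_{i\in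 M(C)}p_i-\gamma z$ with $\gamma>0$. An optimal contract is a feasible contract maximizing the seller's profit. A core-periphery network with core $K$ and periphery $P$ (a partition of $N$) is one in which each core node is linked to every other node, and no two periphery nodes are linked. *)

theory Defs
  imports Complex_Main
begin

definition buyers :: "nat \<Rightarrow> nat set" where
  "buyers n = {1..n}"

definition network :: "nat \<Rightarrow> (nat \<Rightarrow> nat \<Rightarrow> bool) \<Rightarrow> bool" where
  "network n E \<longleftrightarrow>
     (\<forall>i j. E i j \<longrightarrow> i \<in> buyers n \<and> j \<in> buyers n) \<and>
     (\<forall>i j. E i j \<longrightarrow> E j i) \<and> (\<forall>i. \<not> E i i)"

definition nbrs :: "nat \<Rightarrow> (nat \<Rightarrow> nat \<Rightarrow> bool) \<Rightarrow> nat \<Rightarrow> nat set" where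
  "nbrs n E i = {j \<in> buyers n. E i j}"

text \<open>A contract: target set M(C), common precision z, prices p (only p i for i in M(C) matter).\<close>
record contract =
  target :: "nat set"
  prec :: real
  price :: "nat \<Rightarrow> real"

definition mcount :: "nat \<Rightarrow> (nat \<Rightarrow> nat \<Rightarrow> bool) \<Rightarrow> contract \<Rightarrow> nat \<Rightarrow> nat" where
  "mcount n E C i = card (nbrs n E i \<inter> target C)"

definition buyer_payoff ::
  "nat \<Rightarrow> real \<Rightarrow> (nat \<Rightarrow> nat \<Rightarrow> bool) \<Rightarrow> contract \<Rightarrow> nat \<Rightarrow> real" where
  "buyer_payoff n z0 E C i =
     (if i \<in> target C
      then - 1 / (z0 + (real (mcount n E C i) + 1) * prec C) - price C i
      else - 1 / (z0 + real (mcount n E C i) * prec C))"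

definition feasible ::
  "nat \<Rightarrow> real \<Rightarrow> (nat \<Rightarrow> nat \<Rightarrow> bool) \<Rightarrow> contract \<Rightarrow> bool" where
  "feasible n z0 E C \<longleftrightarrow>
     target C \<subseteq> buyers n \<and> prec C > 0 \<and>
     (\<forall>i \<in> target C. price C i \<ge> 0 \<and>
        price C i \<le> 1 / (z0 + real (mcount n E C i) * prec C)
                    - 1 / (z0 + (real (mcount n E C i) + 1) * prec C))"

definition profit :: "real \<Rightarrow> contract \<Rightarrow> real" where
  "profit \<gamma> C = (\<Sum>i \<in> target C. price C i) - \<gamma> * prec C"

definition optimal_contract ::
  "nat \<Rightarrow> real \<Rightarrow> real \<Rightarrow> (nat \<Rightarrow> nat \<Rightarrow> bool) \<Rightarrow> contract \<Rightarrow> bool" where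
  "optimal_contract n z0 \<gamma> E C \<longleftrightarrow>
     feasible n z0 E C \<and>
     (\<forall>C'. feasible n z0 E C' \<longrightarrow> profit \<gamma> C' \<le> profit \<gamma> C)"

definition core_periphery ::
  "nat \<Rightarrow> (nat \<Rightarrow> nat \<Rightarrow> bool) \<Rightarrow> nat set \<Rightarrow> nat set \<Rightarrow> bool" where
  "core_periphery n E K P \<longleftrightarrow>
     K \<union> P = buyers n \<and> K \<inter> P = {} \<and>
     (\<forall>k \<in> K. \<forall>j \<in> buyers n. j \<noteq> k \<longrightarrow> E k j) \<and>
     (\<forall>i \<in> P. \<forall>j \<in> P. \<not> E i j)"

end

theory Submission
  imports Defs
begin


lemma cw:
  fixes E :: "nat \<Rightarrow> nat \<Rightarrow> bool" and \<phi> :: "nat \<Rightarrow> real" and c :: real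
  assumes sym: "\<And>i j. E i j \<Longrightarrow> E j i" and irr: "\<And>i. \<not> E i i"
    and anti: "\<And>a b. a \<le> b \<Longrightarrow> \<phi> b \<le> \<phi> a"
    and bd: "\<And>d. real (d+1) * \<phi> d \<le> c"
    and sbd: "\<And>d. d \<ge> 1 \<Longrightarrow> real (d+1) * \<phi> d < c"
    and fin: "finite S"
  shows "\<exists>J \<subseteq> S. (\<forall>i\<in>J. \<forall>j\<in>J. \<not> E i j) \<and> (S \<noteq> {} \<longrightarrow> J \<noteq> {}) \<and>
     (\<Sum>i\<in>S. \<phi> (card {j\<in>S. E i j})) \<le> c * card J \<and>
     ((\<exists>i\<in>S. card {j\<in>S. E i j} \<ge> 1) \<longrightarrow> (\<Sum>i\<in>S. \<phi> (card {j\<in>S. E i j})) < c * card J)"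
  using fin
proof (induction S rule: finite_psubset_induct)
  case (psubset S)
  show ?case
  proof (cases "S = {}")
    case True thus ?thesis by auto
  next
    case False
    define deg where "deg = (\<lambda>i. card {j\<in>S. E i j})"
    have "Min (deg ` S) \<in> deg ` S" using False psubset.hyps by simp
    then obtain v where vS: "v \<in> S" and vmin0: "deg v = Min (deg ` S)" by auto
    have vmin: "deg v \<le> deg i" if "i \<in> S" for i
      using vmin0 that psubset.hyps by simp
    define Nv where "Nv = {j\<in>S. E v j}"
    define S' where "S' = S - insert v Nv"
    have S'sub: "S' \<subset> S" using vS by (auto simp: S'_def)
    from psubset.IH[OF S'sub] obtain J' where J'S: "J' \<subseteq> S'"
      and J'ind: "\<forall>i\<in>J'. \<forall>j\<in>J'. \<not> E i j"
      and J'le: "(\<Sum>i\<in>S'. \<phi> (card {j\<in>S'. E i j})) \<le> c * card J'"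
      and J'lt: "(\<exists>i\<in>S'. card {j\<in>S'. E i j} \<ge> 1) \<longrightarrow> (\<Sum>i\<in>S'. \<phi> (card {j\<in>S'. E i j})) < c * card J'"
      by blast
    define J where "J = insert v J'"
    have finS: "finite S" using psubset.hyps .
    have vNv: "v \<notin> Nv" using irr by (auto simp: Nv_def)
    have finNv: "finite Nv" using finS by (auto simp: Nv_def)
    have cardNv: "card Nv = deg v" by (simp add: Nv_def deg_def)
    have vJ': "v \<notin> J'" using J'S by (auto simp: S'_def)
    have finJ': "finite J'" using J'S finS S'sub by (meson finite_subset psubset_imp_subset)
    have cardJ: "card J = card J' + 1" using vJ' finJ' by (simp add: J_def)
    have Jsub: "J \<subseteq> S" using J'S vS S'sub by (auto simp: J_def)
    have Jind: "\<forall>i\<in>J. \<forall>j\<in>J. \<not> E i j"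
    proof (intro ballI)
      fix i j assume i: "i \<in> J" and j: "j \<in> J"
      have nv: "\<not> E v x" if "x \<in> J'" for x using that J'S by (auto simp: S'_def Nv_def)
      show "\<not> E i j"
        using i j J'ind irr nv sym by (auto simp: J_def) (meson nv sym)
    qed
    have ins_sub: "insert v Nv \<subseteq> S" using vS by (auto simp: Nv_def)
    have split: "(\<Sum>i\<in>S. \<phi> (deg i)) = (\<Sum>i\<in>S'. \<phi> (deg i)) + (\<Sum>i\<in>insert v Nv. \<phi> (deg i))"
      unfolding S'_def using sum.subset_diff[OF ins_sub finS] .
    have b1: "(\<Sum>i\<in>insert v Nv. \<phi> (deg i)) \<le> real (deg v + 1) * \<phi> (deg v)"
    proof -
      have "(\<Sum>i\<in>insert v Nv. \<phi> (deg i)) \<le> of_nat (card (insert v Nv)) * \<phi> (deg v)"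
        by (rule sum_bounded_above) (use ins_sub vmin anti in blast)
      also have "card (insert v Nv) = deg v + 1" using vNv finNv cardNv by simp
      finally show ?thesis by simp
    qed
    have b2: "(\<Sum>i\<in>S'. \<phi> (deg i)) \<le> (\<Sum>i\<in>S'. \<phi> (card {j\<in>S'. E i j}))"
    proof (rule sum_mono)
      fix i assume "i \<in> S'"
      have "card {j\<in>S'. E i j} \<le> deg i" unfolding deg_def
        by (rule card_mono) (use finS S'sub in auto)
      thus "\<phi> (deg i) \<le> \<phi> (card {j\<in>S'. E i j})" by (rule anti)
    qed
    have le: "(\<Sum>i\<in>S. \<phi> (deg i)) \<le> c * card J"
      using split b1 b2 J'le bd[of "deg v"] cardJ by (simp add: algebra_simps)
    have lt: "(\<Sum>i\<in>S. \<phi> (deg i)) < c * card J" if ex: "\<exists>i\<in>S. deg i \<ge> 1"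
    proof (cases "deg v \<ge> 1")
      case True
      then show ?thesis
        using split b1 b2 J'le sbd[of "deg v"] cardJ by (simp add: algebra_simps)
    next
      case False
      then have "deg v = 0" by simp
      then have Nv0: "Nv = {}" using cardNv finNv by simp
      from ex obtain i where iS: "i \<in> S" and di: "deg i \<ge> 1" by blast
      have iv: "i \<noteq> v" using di \<open>deg v = 0\<close> by auto
      have iS': "i \<in> S'" using iS iv Nv0 by (auto simp: S'_def)
      have "{j\<in>S'. E i j} = {j\<in>S. E i j}"
        using Nv0 sym vS iS by (auto simp: S'_def Nv_def)
      then have "card {j\<in>S'. E i j} \<ge> 1" using di by (simp add: deg_def)
      then have "(\<Sum>i\<in>S'. \<phi> (card {j\<in>S'. E i j})) < c * card J'" using J'lt iS' by blast
      then show ?thesis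
        using split b1 b2 bd[of "deg v"] cardJ by (simp add: algebra_simps)
    qed
    show ?thesis
      using Jsub Jind le lt vS unfolding deg_def J_def by blast
  qed
qed


definition gg :: "real \<Rightarrow> real \<Rightarrow> real" where "gg z0 v = 1/z0 - 1/(z0+v)"

lemma opt_price:
  assumes opt: "optimal_contract n z0 \<gamma> E C" and i: "i \<in> target C"
  shows "price C i = 1/(z0 + real (mcount n E C i) * prec C) - 1/(z0 + (real (mcount n E C i) + 1) * prec C)"
proof (rule ccontr)
  define b where "b = 1/(z0 + real (mcount n E C i) * prec C) - 1/(z0 + (real (mcount n E C i) + 1) * prec C)"
  assume "price C i \<noteq> 1/(z0 + real (mcount n E C i) * prec C) - 1/(z0 + (real (mcount n E C i) + 1) * prec C)"
  then have ne: "price C i \<noteq> b" by (simp add: b_def)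
  have feas: "feasible n z0 E C" using opt by (simp add: optimal_contract_def)
  then have le: "price C i \<le> b" and p0: "price C i \<ge> 0" using i by (auto simp: feasible_def b_def)
  with ne have lt: "price C i < b" by simp
  define C2 where "C2 = C\<lparr>price := (price C)(i := b)\<rparr>"
  have mc: "mcount n E C2 j = mcount n E C j" for j by (simp add: C2_def mcount_def)
  have tC2: "target C2 = target C" and pC2: "prec C2 = prec C" by (simp_all add: C2_def)
  have pr2: "price C2 j = (if j = i then b else price C j)" for j by (simp add: C2_def)
  have feas2: "feasible n z0 E C2"
    using feas lt p0 unfolding feasible_def tC2 pC2 mc pr2 by (auto simp: b_def)
  have finT: "finite (target C)"
    using feas unfolding feasible_def buyers_def by (meson finite_atLeastAtMost finite_subset)
  have "(\<Sum>j\<in>target C. price C2 j) = price C2 i + (\<Sum>j\<in>target C - {i}. price C2 j)"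
    using finT i by (simp add: sum.remove)
  also have "(\<Sum>j\<in>target C - {i}. price C2 j) = (\<Sum>j\<in>target C - {i}. price C j)"
    by (rule sum.cong) (auto simp: C2_def)
  also have "(\<Sum>j\<in>target C. price C j) = price C i + (\<Sum>j\<in>target C - {i}. price C j)"
    using finT i by (simp add: sum.remove)
  ultimately have "(\<Sum>j\<in>target C. price C2 j) > (\<Sum>j\<in>target C. price C j)"
    using lt by (simp add: C2_def)
  then have "profit \<gamma> C2 > profit \<gamma> C" by (simp add: profit_def C2_def)
  moreover have "profit \<gamma> C2 \<le> profit \<gamma> C" using opt feas2 by (simp add: optimal_contract_def)
  ultimately show False by simp
qed

lemma indep_contract:
  assumes J: "J \<subseteq> buyers n" and ind: "\<forall>i\<in>J. \<forall>j\<in>J. \<not> E i j" and v: "v > 0" and z0: "z0 > 0"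
  shows "feasible n z0 E \<lparr>target = J, prec = v, price = (\<lambda>_. gg z0 v)\<rparr>"
    and "profit \<gamma> \<lparr>target = J, prec = v, price = (\<lambda>_. gg z0 v)\<rparr> = real (card J) * gg z0 v - \<gamma> * v"
proof -
  have mc: "mcount n E \<lparr>target = J, prec = v, price = (\<lambda>_. gg z0 v)\<rparr> i = 0" if "i \<in> J" for i
  proof -
    have "nbrs n E i \<inter> J = {}" using ind that by (auto simp: nbrs_def)
    thus ?thesis by (simp add: mcount_def)
  qed
  have "gg z0 v \<ge> 0" using v z0 by (simp add: gg_def field_simps)
  then show "feasible n z0 E \<lparr>target = J, prec = v, price = (\<lambda>_. gg z0 v)\<rparr>"
    using J v mc by (auto simp: feasible_def gg_def)
  show "profit \<gamma> \<lparr>target = J, prec = v, price = (\<lambda>_. gg z0 v)\<rparr> = real (card J) * gg z0 v - \<gamma> * v"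
    by (simp add: profit_def)
qed

lemma phi_bound:
  fixes z0 w D :: real
  assumes z0: "z0 > 0" and w: "w > 0" and D: "D \<ge> 1"
  shows "(D + 1) * (1/(z0 + D * w) - 1/(z0 + (D + 1) * w)) < 2 / (5 * z0)"
proof -
  have p1: "z0 + D * w > 0" and p2: "z0 + (D+1) * w > 0" using z0 w D by (auto intro: add_pos_nonneg)
  have eq: "1/(z0 + D * w) - 1/(z0 + (D + 1) * w) = w / ((z0 + D * w) * (z0 + (D+1) * w))"
    using p1 p2 by (simp add: field_simps)
  have key: "5 * z0 * ((D+1) * w) < 2 * ((z0 + D * w) * (z0 + (D+1) * w))"
  proof -
    have "16 * (2 * ((z0 + D * w) * (z0 + (D+1) * w)) - 5 * z0 * ((D+1) * w))
        = 2 * (4 * z0 - (D+3) * w)^2 + 2 * w^2 * (15 * D^2 + 10 * D - 9)"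
      by (simp add: algebra_simps power2_eq_square)
    moreover have "2 * w^2 * (15 * D^2 + 10 * D - 9) > 0"
    proof -
      have "15 * D^2 + 10 * D - 9 > 0" using D one_le_power[OF D, of 2] by linarith
      thus ?thesis using w by simp
    qed
    moreover have "2 * (4 * z0 - (D+3) * w)^2 \<ge> 0" by simp
    ultimately have "16 * (2 * ((z0 + D * w) * (z0 + (D+1) * w)) - 5 * z0 * ((D+1) * w)) > 0"
      by linarith
    then show ?thesis by (simp only: zero_less_mult_iff) simp
  qed
  have "(D + 1) * (w / ((z0 + D * w) * (z0 + (D+1) * w))) = ((D+1) * w) / ((z0 + D * w) * (z0 + (D+1) * w))"
    by simp
  also have "\<dots> < 2 / (5 * z0)"
  proof -
    define Y where "Y = (z0 + D * w) * (z0 + (D+1) * w)"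
    have Y: "Y > 0" using p1 p2 by (simp add: Y_def)
    have "(D+1)*w < 2 * Y / (5 * z0)"
      using key z0 by (simp add: pos_less_divide_eq Y_def mult.commute mult.left_commute)
    then have "(D+1)*w < 2 / (5 * z0) * Y" by simp
    then show ?thesis using pos_divide_less_eq[OF Y] by (simp add: Y_def)
  qed
  finally show ?thesis using eq by simp
qed


lemma fin_target: "feasible n z0 E C \<Longrightarrow> finite (target C)"
  unfolding feasible_def buyers_def by (meson finite_atLeastAtMost finite_subset)

lemma mcount_eq:
  assumes "target C \<subseteq> buyers n"
  shows "mcount n E C j = card {k\<in>target C. E j k}"
proof -
  have "nbrs n E j \<inter> target C = {k\<in>target C. E j k}" using assms by (auto simp: nbrs_def)
  thus ?thesis by (simp add: mcount_def)
qed

lemma opt_indep: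
  assumes opt: "optimal_contract n z0 \<gamma> E C" and net: "network n E"
    and z0: "z0 > 0" and gam: "\<gamma> > 0" and small: "\<gamma> * z0^2 \<le> 2/15"
    and i: "i \<in> target C"
  shows "mcount n E C i = 0"
proof (rule ccontr)
  assume ne: "mcount n E C i \<noteq> 0"
  define T where "T = target C"
  define w where "w = prec C"
  have feas: "feasible n z0 E C" using opt by (simp add: optimal_contract_def)
  have Tsub: "T \<subseteq> buyers n" and w: "w > 0" using feas by (auto simp: feasible_def T_def w_def)
  have finT: "finite T" using fin_target[OF feas] by (simp add: T_def)
  have sym: "\<And>a b. E a b \<Longrightarrow> E b a" and irr: "\<And>a. \<not> E a a" using net by (auto simp: network_def)
  define \<phi> where "\<phi> = (\<lambda>a::nat. 1/(z0 + real a * w) - 1/(z0 + (real a + 1) * w))"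
  have \<phi>eq: "\<phi> a = w / ((z0 + real a * w) * (z0 + (real a + 1) * w))" for a
  proof -
    have "z0 + real a * w > 0" "z0 + (real a + 1) * w > 0" using z0 w by (auto intro: add_pos_nonneg)
    thus ?thesis by (simp add: \<phi>_def field_simps)
  qed
  have anti: "\<phi> b \<le> \<phi> a" if ab: "a \<le> b" for a b
  proof -
    have p1: "z0 + real a * w > 0" "z0 + (real a + 1) * w > 0" using z0 w by (auto intro: add_pos_nonneg)
    have m1: "z0 + real a * w \<le> z0 + real b * w" "z0 + (real a + 1) * w \<le> z0 + (real b + 1) * w"
      using ab w by (auto intro: mult_right_mono)
    have "(z0 + real a * w) * (z0 + (real a + 1) * w) \<le> (z0 + real b * w) * (z0 + (real b + 1) * w)"
      using m1 p1 by (intro mult_mono) auto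
    moreover have "0 < (z0 + real a * w) * (z0 + (real a + 1) * w)" using p1 by simp
    ultimately show ?thesis unfolding \<phi>eq using w
      by (intro divide_left_mono) auto
  qed
  define c where "c = max (\<phi> 0) (2 / (5 * z0))"
  have sbd: "real (d+1) * \<phi> d < c" if "d \<ge> 1" for d
  proof -
    have "(real d + 1) * (1/(z0 + real d * w) - 1/(z0 + (real d + 1) * w)) < 2 / (5 * z0)"
      by (rule phi_bound) (use z0 w that in auto)
    then have "real (d+1) * \<phi> d < 2 / (5 * z0)" by (simp add: \<phi>_def add.commute)
    moreover have "2 / (5 * z0) \<le> c" by (simp add: c_def)
    ultimately show ?thesis by linarith
  qed
  have bd: "real (d+1) * \<phi> d \<le> c" for d
  proof (cases "d = 0")
    case True thus ?thesis by (simp add: c_def)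
  next
    case False thus ?thesis using sbd[of d] by simp
  qed
  obtain J where JT: "J \<subseteq> T" and Jind: "\<forall>a\<in>J. \<forall>b\<in>J. \<not> E a b" and Jne: "T \<noteq> {} \<longrightarrow> J \<noteq> {}"
    and Jlt: "(\<exists>a\<in>T. card {b\<in>T. E a b} \<ge> 1) \<longrightarrow> (\<Sum>a\<in>T. \<phi> (card {b\<in>T. E a b})) < c * card J"
    using cw[of E \<phi> c T, OF sym irr anti bd sbd finT] by blast
  have mc: "mcount n E C j = card {k\<in>T. E j k}" for j
    using mcount_eq[of C n E j] Tsub by (simp add: T_def)
  have "\<exists>a\<in>T. card {b\<in>T. E a b} \<ge> 1" using i ne mc by (auto simp: T_def Suc_le_eq)
  then have lt: "(\<Sum>a\<in>T. \<phi> (card {b\<in>T. E a b})) < c * card J" using Jlt by blast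
  have Jne': "J \<noteq> {}" using Jne i by (auto simp: T_def)
  have finJ: "finite J" using JT finT finite_subset by blast
  have cJ: "card J \<ge> 1" using Jne' finJ by (simp add: Suc_le_eq card_gt_0_iff)
  have prof: "profit \<gamma> C = (\<Sum>a\<in>T. \<phi> (card {b\<in>T. E a b})) - \<gamma> * w"
  proof -
    have "price C a = \<phi> (card {b\<in>T. E a b})" if "a \<in> T" for a
      using opt_price[OF opt, of a] that mc by (simp add: T_def \<phi>_def w_def)
    then show ?thesis by (simp add: profit_def T_def w_def)
  qed
  have Jb: "J \<subseteq> buyers n" using JT Tsub by blast
  have better: "real (card J) * gg z0 v - \<gamma> * v \<le> profit \<gamma> C" if v: "v > 0" for v
  proof -
    have "feasible n z0 E \<lparr>target = J, prec = v, price = (\<lambda>_. gg z0 v)\<rparr>"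
      using indep_contract(1)[OF Jb Jind v z0] .
    then have "profit \<gamma> \<lparr>target = J, prec = v, price = (\<lambda>_. gg z0 v)\<rparr> \<le> profit \<gamma> C"
      using opt by (simp add: optimal_contract_def)
    then show ?thesis using indep_contract(2)[OF Jb Jind v z0, of \<gamma>] by simp
  qed
  have \<phi>0: "\<phi> 0 = gg z0 w" by (simp add: \<phi>_def gg_def)
  show False
  proof (cases "\<phi> 0 \<ge> 2 / (5 * z0)")
    case True
    then have "c = gg z0 w" by (simp add: c_def \<phi>0)
    then have "profit \<gamma> C < real (card J) * gg z0 w - \<gamma> * w" using prof lt by (simp add: mult.commute)
    then show False using better[OF w] by simp
  next
    case False
    then have cc: "c = 2 / (5 * z0)" by (simp add: c_def)
    have g2: "gg z0 (2 * z0) = 2 / (3 * z0)" using z0 by (simp add: gg_def field_simps)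
    have "\<gamma> * w > 0" using gam w by simp
    then have "profit \<gamma> C < 2 / (5 * z0) * card J" using prof lt cc by (simp add: mult.commute)
    also have "2 / (5 * z0) * card J \<le> real (card J) * gg z0 (2 * z0) - \<gamma> * (2 * z0)"
    proof -
      have "\<gamma> * (2 * z0) \<le> 4 / (15 * z0)"
      proof -
        have "\<gamma> * (2 * z0) * z0 \<le> 4 / 15" using small by (simp add: power2_eq_square mult_ac)
        thus ?thesis using z0 by (simp add: pos_le_divide_eq mult_ac)
      qed
      also have "4 / (15 * z0) \<le> real (card J) * (4 / (15 * z0))"
      proof -
        have "(1::real) \<le> real (card J)" using cJ by simp
        moreover have "0 \<le> 4 / (15 * z0)" using z0 by simp
        ultimately show ?thesis using mult_right_mono[of 1 "real (card J)" "4 / (15 * z0)"] by simp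
      qed
      also have "real (card J) * (4 / (15 * z0)) = real (card J) * gg z0 (2 * z0) - 2 / (5 * z0) * card J"
        using g2 z0 by (simp add: field_simps)
      finally show ?thesis by simp
    qed
    finally show False using better[of "2 * z0"] z0 by simp
  qed
qed


lemma strict_conv:
  fixes A B :: real
  assumes A: "A > 0" and B: "B > 0" and ne: "A \<noteq> B"
  shows "2 / (A + B) < (1/A + 1/B) / 2"
proof -
  have "0 < (A - B)^2" using ne by simp
  then have "4 * (A * B) < (A + B) * (A + B)" by (simp add: power2_eq_square algebra_simps)
  then show ?thesis using A B by (simp add: field_simps)
qed

lemma payoff_in:
  assumes "i \<in> target C" "mcount n E C i = 0" "price C i = gg z0 (prec C)" "z0 > 0" "prec C > 0"
  shows "buyer_payoff n z0 E C i = - 1 / z0"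
  using assms by (simp add: buyer_payoff_def gg_def)

theorem proposition5:
  fixes n m :: nat and z0 \<gamma> :: real
    and E :: "nat \<Rightarrow> nat \<Rightarrow> bool" and K P :: "nat set" and C :: contract
  assumes z0_pos: "z0 > 0" and gamma_pos: "\<gamma> > 0"
    and z0_small: "z0 < 1 / (2 * sqrt \<gamma>) * ((real n + 1) / (2 * real n + 1))"
    and net: "network n E"
    and cp: "core_periphery n E K P"
    and card_P: "card P = m"
    and opt: "optimal_contract n z0 \<gamma> E C"
    and targ: "target C = P"
  shows "\<not> (\<exists>E' C'. network n E' \<and> optimal_contract n z0 \<gamma> E' C' \<and>
             profit \<gamma> C' \<ge> profit \<gamma> C \<and>
             (\<forall>i \<in> buyers n. buyer_payoff n z0 E' C' i \<ge> buyer_payoff n z0 E C i) \<and>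
             (\<exists>i \<in> buyers n. buyer_payoff n z0 E' C' i > buyer_payoff n z0 E C i))"
proof
  assume "\<exists>E' C'. network n E' \<and> optimal_contract n z0 \<gamma> E' C' \<and>
             profit \<gamma> C' \<ge> profit \<gamma> C \<and>
             (\<forall>i \<in> buyers n. buyer_payoff n z0 E' C' i \<ge> buyer_payoff n z0 E C i) \<and>
             (\<exists>i \<in> buyers n. buyer_payoff n z0 E' C' i > buyer_payoff n z0 E C i)"
  then obtain E' C' where net': "network n E'" and opt': "optimal_contract n z0 \<gamma> E' C'"
    and prof_ge: "profit \<gamma> C' \<ge> profit \<gamma> C"
    and pay_ge: "\<forall>i \<in> buyers n. buyer_payoff n z0 E' C' i \<ge> buyer_payoff n z0 E C i"
    and pay_gt: "\<exists>i \<in> buyers n. buyer_payoff n z0 E' C' i > buyer_payoff n z0 E C i"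
    by blast
  define z where "z = prec C"
  have feas: "feasible n z0 E C" using opt by (simp add: optimal_contract_def)
  have Pb: "P \<subseteq> buyers n" and z: "z > 0" using feas targ by (auto simp: feasible_def z_def)
  have finP: "finite P" using fin_target[OF feas] targ by simp
  have cpK: "K \<union> P = buyers n" "K \<inter> P = {}"
    and cpE: "\<And>k j. k \<in> K \<Longrightarrow> j \<in> buyers n \<Longrightarrow> j \<noteq> k \<Longrightarrow> E k j"
    and cpP: "\<And>i j. i \<in> P \<Longrightarrow> j \<in> P \<Longrightarrow> \<not> E i j"
    using cp by (auto simp: core_periphery_def)
  have Pne: "P \<noteq> {}"
  proof
    assume P0: "P = {}"
    define C3 where "C3 = C\<lparr>prec := z / 2\<rparr>"
    have "feasible n z0 E C3" using targ P0 z by (simp add: C3_def feasible_def)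
    then have "profit \<gamma> C3 \<le> profit \<gamma> C" using opt by (simp add: optimal_contract_def)
    moreover have "profit \<gamma> C3 = - \<gamma> * (z / 2)" "profit \<gamma> C = - \<gamma> * z"
      using targ P0 by (simp_all add: C3_def profit_def z_def)
    ultimately show False using gamma_pos z by simp
  qed
  have m1: "m \<ge> 1" using Pne finP card_P card_gt_0_iff[of P] by simp
  have n1: "n \<ge> 1" using Pne Pb by (auto simp: buyers_def)
  have small: "\<gamma> * z0^2 \<le> 2/15"
  proof -
    define s where "s = sqrt \<gamma>"
    have s: "s > 0" using gamma_pos by (simp add: s_def)
    have ss: "s * s = \<gamma>" using gamma_pos by (simp add: s_def)
    have frac: "(real n + 1) / (2 * real n + 1) \<le> 2/3" using n1 by (simp add: field_simps)
    have "z0 < 1 / (2 * s) * ((real n + 1) / (2 * real n + 1))" using z0_small by (simp add: s_def)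
    also have "\<dots> \<le> 1 / (2 * s) * (2/3)" using frac s by (intro mult_left_mono) auto
    finally have "z0 * s < 1/3" using s by (simp add: field_simps)
    then have "(z0 * s) * (z0 * s) < 1/3 * (1/3)" using z0_pos s
      by (intro mult_strict_mono) auto
    moreover have "(z0 * s) * (z0 * s) = \<gamma> * z0^2" using ss by (simp add: power2_eq_square mult_ac)
    ultimately show ?thesis by simp
  qed
  have mcP: "mcount n E C i = 0" if "i \<in> P" for i
  proof -
    have "nbrs n E i \<inter> P = {}" using cpP that by (auto simp: nbrs_def)
    thus ?thesis by (simp add: mcount_def targ)
  qed
  have prP: "price C i = gg z0 z" if "i \<in> P" for i
    using opt_price[OF opt, of i] that targ mcP[OF that] by (simp add: gg_def z_def)
  have payP: "buyer_payoff n z0 E C i = - 1 / z0" if "i \<in> P" for i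
    using payoff_in[of i C n E z0] that targ mcP prP z z0_pos by (simp add: z_def)
  have payK: "buyer_payoff n z0 E C k = - 1 / (z0 + real m * z)" if "k \<in> buyers n" "k \<notin> P" for k
  proof -
    have kK: "k \<in> K" using that cpK by auto
    have "nbrs n E k \<inter> P = P" using Pb cpE[OF kK] that by (auto simp: nbrs_def)
    then have "mcount n E C k = m" by (simp add: mcount_def targ card_P)
    thus ?thesis using that targ by (simp add: buyer_payoff_def z_def)
  qed
  have profC: "profit \<gamma> C = real m * gg z0 z - \<gamma> * z"
    using prP card_P by (simp add: profit_def targ z_def)
  have Pind: "\<forall>a\<in>P. \<forall>b\<in>P. \<not> E a b" using cpP by blast
  have bestC: "real m * gg z0 v - \<gamma> * v \<le> profit \<gamma> C" if v: "v > 0" for v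
  proof -
    have "feasible n z0 E \<lparr>target = P, prec = v, price = (\<lambda>_. gg z0 v)\<rparr>"
      using indep_contract(1)[OF Pb Pind v z0_pos] .
    then have "profit \<gamma> \<lparr>target = P, prec = v, price = (\<lambda>_. gg z0 v)\<rparr> \<le> profit \<gamma> C"
      using opt by (simp add: optimal_contract_def)
    then show ?thesis using indep_contract(2)[OF Pb Pind v z0_pos, of \<gamma>] card_P by simp
  qed
  define T where "T = target C'"
  define w where "w = prec C'"
  have feas': "feasible n z0 E' C'" using opt' by (simp add: optimal_contract_def)
  have Tb: "T \<subseteq> buyers n" and w: "w > 0" using feas' by (auto simp: feasible_def T_def w_def)
  have finT: "finite T" using fin_target[OF feas'] by (simp add: T_def)
  have mcT: "mcount n E' C' i = 0" if "i \<in> T" for i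
    using opt_indep[OF opt' net' z0_pos gamma_pos small] that by (simp add: T_def)
  have prT: "price C' i = gg z0 w" if "i \<in> T" for i
    using opt_price[OF opt', of i] that mcT[OF that] by (simp add: gg_def w_def T_def)
  have payT: "buyer_payoff n z0 E' C' i = - 1 / z0" if "i \<in> T" for i
    using payoff_in[of i C' n E' z0] that mcT prT w z0_pos by (simp add: w_def T_def)
  have payN: "buyer_payoff n z0 E' C' i = - 1 / (z0 + real (mcount n E' C' i) * w)" if "i \<notin> T" for i
    using that by (simp add: buyer_payoff_def T_def w_def)
  have mcle: "mcount n E' C' i \<le> card T" for i
    unfolding mcount_def T_def[symmetric] using finT by (intro card_mono) auto
  have profC': "profit \<gamma> C' = real (card T) * gg z0 w - \<gamma> * w"
    using prT by (simp add: profit_def T_def w_def)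
  have ggpos: "gg z0 v > 0" if "v > 0" for v
  proof -
    have "1 / (z0 + v) < 1 / z0" using that z0_pos by (intro divide_strict_left_mono) auto
    thus ?thesis by (simp add: gg_def)
  qed
  have mz: "real m * z > 0" using m1 z by simp
  have TP: "T \<subseteq> P"
  proof
    fix k assume kT: "k \<in> T"
    show "k \<in> P"
    proof (rule ccontr)
      assume kP: "k \<notin> P"
      have kb: "k \<in> buyers n" using kT Tb by blast
      have "- 1 / z0 \<ge> - 1 / (z0 + real m * z)"
        using bspec[OF pay_ge kb] payT[OF kT] payK[OF kb kP] by simp
      moreover have "1 / (z0 + real m * z) < 1 / z0"
        using z0_pos mz by (intro divide_strict_left_mono) auto
      ultimately show False by simp
    qed
  qed
  have "card T \<le> m" using card_mono[OF finP TP] card_P by simp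
  moreover have "card T \<ge> m"
  proof -
    have "real m * gg z0 w \<le> real (card T) * gg z0 w"
      using bestC[OF w] prof_ge profC' by simp
    then show ?thesis using ggpos[OF w] by simp
  qed
  ultimately have cT: "card T = m" by simp
  have TeqP: "T = P" using card_subset_eq[OF finP TP] cT card_P by simp
  obtain i where ib: "i \<in> buyers n" and igt: "buyer_payoff n z0 E' C' i > buyer_payoff n z0 E C i"
    using pay_gt by blast
  have iP: "i \<notin> P"
  proof
    assume "i \<in> P"
    then show False using igt payP payT TeqP by simp
  qed
  define a where "a = mcount n E' C' i"
  have ale: "a \<le> m" using mcle[of i] cT by (simp add: a_def)
  have "- 1 / (z0 + real a * w) > - 1 / (z0 + real m * z)"
    using igt payN[of i] iP TeqP payK[OF ib iP] by (simp add: a_def)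
  then have "1 / (z0 + real a * w) < 1 / (z0 + real m * z)" by simp
  moreover have "z0 + real m * z > 0" using z0_pos mz by simp
  moreover have "z0 + real a * w > 0" using z0_pos w by (simp add: add_pos_nonneg)
  ultimately have "z0 + real m * z < z0 + real a * w"
    using inverse_less_iff_less[of "z0 + real a * w" "z0 + real m * z"] by (simp add: inverse_eq_divide)
  then have "real m * z < real a * w" by simp
  also have "\<dots> \<le> real m * w" using ale w by (simp add: mult_right_mono)
  finally have wz: "z < w" using m1 by simp
  \<comment> \<open>strict concavity contradiction\<close>
  define f where "f = (\<lambda>v. real m * gg z0 v - \<gamma> * v)"
  have fw: "f w \<ge> f z" using prof_ge profC profC' cT by (simp add: f_def)
  define u where "u = (z + w) / 2"
  have u: "u > 0" using z w by (simp add: u_def)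
  have fu: "f u \<le> f z" using bestC[OF u] profC by (simp add: f_def)
  have conv: "2 / ((z0 + z) + (z0 + w)) < (1 / (z0 + z) + 1 / (z0 + w)) / 2"
    using strict_conv[of "z0 + z" "z0 + w"] z0_pos z w wz by simp
  define A where "A = real m * (1 / (z0 + z))"
  define B where "B = real m * (1 / (z0 + w))"
  define U where "U = real m * (2 / ((z0 + z) + (z0 + w)))"
  have fz: "f z = real m / z0 - A - \<gamma> * z" by (simp add: f_def gg_def A_def algebra_simps)
  have fw2: "f w = real m / z0 - B - \<gamma> * w" by (simp add: f_def gg_def B_def algebra_simps)
  have "1 / (z0 + u) = 2 / ((z0 + z) + (z0 + w))" by (simp add: u_def field_simps)
  then have hU: "real m * (1 / (z0 + u)) = U" by (simp add: U_def)
  have gu: "\<gamma> * u = \<gamma> * z / 2 + \<gamma> * w / 2" by (simp add: u_def algebra_simps)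
  have fu3: "f u = real m / z0 - real m * (1 / (z0 + u)) - \<gamma> * u" by (simp add: f_def gg_def algebra_simps)
  have fu2: "f u = real m / z0 - U - \<gamma> * z / 2 - \<gamma> * w / 2" using fu3 hU gu by linarith
  have "U < (A + B) / 2"
  proof -
    have "real m * (2 / ((z0 + z) + (z0 + w))) < real m * ((1 / (z0 + z) + 1 / (z0 + w)) / 2)"
      using conv m1 by (intro mult_strict_left_mono) auto
    thus ?thesis by (simp add: U_def A_def B_def algebra_simps)
  qed
  then show False using fw fu fz fw2 fu2 by argo
qed

end
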